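(* For every real $\beta$, the Laplace–Beltrami operator does not move under the Dirac deformation: $D(t)^2=L$ for all $t\in\mathbb{R}$.
   Context: Let $G$ be a finite simple graph. For $k\ge0$ let $\Omega_k$ be the space of complex-valued functions on the (oriented) $k$-simplices of $G$ (complete subgraphs with $k+1$ vertices), $\Omega=\bigoplus_k\Omega_k$. The exterior derivative $d_0:\Omega_k\to\Omega_{k+1}$ is $(d_0f)(x_0,\dots,x_{k+1})=\sum_{j}(-1)^jf(x_0,\dots,\hat x_j,\dots,x_{k+1})$, $D_0=d_0+d_0^*$ and $L=D_0^2$. For a self-adjoint operator $D$ on $\Omega$ whose blocks $\Omega_k\to\Omega_j$ vanish unless $|j-k|\le1$, write $D=d+d^*+b$ with $d$ the blocks $\Omega_k\to\Omega_{k+1}$ and $b$ the block-diagonal part. The Dirac deformation with real parameter $\beta$ is the solution $D(t)$ of $D'=BD-DB$, $D(0)=D_0$, with $B(t)=d(t)-d(t)^*+i\beta b(t)$, $D(t)=d(t)+d(t)^*+b(t)$ (the solution exists for all real $t$ and keeps this form). *)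

theory Defs
  imports "HOL-Analysis.Analysis"
begin

text \<open>Operators on Omega are represented as matrices indexed by simplices,
  i.e. functions simplex => simplex => complex (row index first).
  The orientation of each simplex is the one induced by the linear order on vertices.
  A k-simplex is a simplex x with card x = k + 1.\<close>

definition simple_graph :: "'a set \<Rightarrow> ('a \<Rightarrow> 'a \<Rightarrow> bool) \<Rightarrow> bool" where
  "simple_graph V E \<longleftrightarrow> finite V \<and> (\<forall>u v. E u v \<longrightarrow> E v u) \<and> (\<forall>v. \<not> E v v)
      \<and> (\<forall>u v. E u v \<longrightarrow> u \<in> V \<and> v \<in> V)"

definition simplices :: "'a set \<Rightarrow> ('a \<Rightarrow> 'a \<Rightarrow> bool) \<Rightarrow> 'a set set" where
  "simplices V E = {x. x \<subseteq> V \<and> x \<noteq> {} \<and> (\<forall>u\<in>x. \<forall>v\<in>x. u \<noteq> v \<longrightarrow> E u v)}"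

type_synonym 'a op = "'a set \<Rightarrow> 'a set \<Rightarrow> complex"

definition mmult :: "'a set set \<Rightarrow> 'a op \<Rightarrow> 'a op \<Rightarrow> 'a op" where
  "mmult S A B = (\<lambda>y x. \<Sum>z\<in>S. A y z * B z x)"

definition madj :: "'a op \<Rightarrow> 'a op" where
  "madj A = (\<lambda>y x. cnj (A x y))"

text \<open>Exterior derivative d_0 : Omega_k -> Omega_(k+1):
  (d_0 f)(y_0,...,y_(k+1)) = sum_j (-1)^j f(y_0,..,hat y_j,..,y_(k+1)), with y_0 < ... < y_(k+1).
  Matrix entry (y,x) is (-1)^j when x = y minus its j-th vertex (0-based, sorted order).\<close>
definition ext_deriv :: "('a::linorder) op" where
  "ext_deriv = (\<lambda>y x. if x \<subseteq> y \<and> card y = card x + 1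
       then (-1) ^ card {w\<in>y. w < the_elem (y - x)} else 0)"

definition Dirac0 :: "('a::linorder) op" where
  "Dirac0 = (\<lambda>y x. ext_deriv y x + madj ext_deriv y x)"

definition Laplacian :: "('a::linorder) set set \<Rightarrow> 'a op" where
  "Laplacian S = mmult S Dirac0 Dirac0"

text \<open>Block parts of an operator D = d + d^* + b: d = blocks Omega_k -> Omega_(k+1),
  b = block diagonal part.\<close>
definition dpart :: "'a op \<Rightarrow> 'a op" where
  "dpart M = (\<lambda>y x. if card y = card x + 1 then M y x else 0)"

definition bpart :: "'a op \<Rightarrow> 'a op" where
  "bpart M = (\<lambda>y x. if card y = card x then M y x else 0)"

definition deform_B :: "real \<Rightarrow> 'a op \<Rightarrow> 'a op" where
  "deform_B \<beta> M = (\<lambda>y x. dpart M y x - madj (dpart M) y x + \<i> * complex_of_real \<beta> * bpart M y x)"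

end

theory Submission
  imports Defs "HOL-Analysis.Analysis" "HOL-Library.Function_Algebras"
begin


definition comm :: "'a set set \<Rightarrow> 'a op \<Rightarrow> 'a op \<Rightarrow> 'a op" where
  "comm S A B = mmult S A B - mmult S B A"

definition nrm :: "'a set set \<Rightarrow> 'a op \<Rightarrow> real" where
  "nrm S A = (\<Sum>y\<in>S. \<Sum>x\<in>S. norm (A y x))"

lemma mmult_assoc: "mmult S (mmult S A B) C = mmult S A (mmult S B C)"
proof (rule ext, rule ext)
  fix y x
  have "mmult S (mmult S A B) C y x = (\<Sum>w\<in>S. \<Sum>z\<in>S. A y z * B z w * C w x)"
    unfolding mmult_def by (simp add: sum_distrib_right)
  also have "\<dots> = (\<Sum>z\<in>S. \<Sum>w\<in>S. A y z * B z w * C w x)" by (rule sum.swap)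
  also have "\<dots> = mmult S A (mmult S B C) y x"
    unfolding mmult_def by (simp add: sum_distrib_left mult.assoc)
  finally show "mmult S (mmult S A B) C y x = mmult S A (mmult S B C) y x" .
qed

lemma mmult_diff_left: "mmult S (A - A') C = mmult S A C - mmult S A' C"
  unfolding mmult_def by (auto simp: fun_eq_iff algebra_simps sum_subtractf)

lemma mmult_diff_right: "mmult S C (A - A') = mmult S C A - mmult S C A'"
  unfolding mmult_def by (auto simp: fun_eq_iff algebra_simps sum_subtractf)

lemma mmult_add_left: "mmult S (A + A') C = mmult S A C + mmult S A' C"
  unfolding mmult_def by (auto simp: fun_eq_iff algebra_simps sum.distrib)

lemma comm_diff_right: "comm S C (A - A') = comm S C A - comm S C A'"
  unfolding comm_def by (simp add: mmult_diff_left mmult_diff_right)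

lemma comm_self_sq: "comm S D (mmult S D D) = 0"
  unfolding comm_def by (simp add: mmult_assoc)

lemma deriv_sq_alg:
  "mmult S (comm S B D) D + mmult S D (comm S B D) = comm S B (mmult S D D)"
  unfolding comm_def by (simp add: mmult_diff_left mmult_diff_right mmult_assoc)

lemma entry_le_nrm:
  assumes "finite S" "y \<in> S" "x \<in> S" shows "norm (A y x) \<le> nrm S A"
proof -
  have "norm (A y x) \<le> (\<Sum>x\<in>S. norm (A y x))"
    using assms by (intro member_le_sum) auto
  also have "\<dots> \<le> nrm S A" unfolding nrm_def
    using assms by (intro member_le_sum[where f="\<lambda>y. \<Sum>x\<in>S. norm (A y x)"]) (auto intro: sum_nonneg)
  finally show ?thesis .
qed

lemma col_le_nrm:
  assumes "finite S" "x \<in> S" shows "(\<Sum>z\<in>S. norm (A z x)) \<le> nrm S A"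
  unfolding nrm_def using assms by (intro sum_mono member_le_sum) auto

lemma nrm_nonneg: "nrm S A \<ge> 0"
  unfolding nrm_def by (intro sum_nonneg) auto

lemma mmult_bound:
  assumes "finite S" "y \<in> S" "x \<in> S"
  shows "norm (mmult S A B y x) \<le> nrm S A * nrm S B"
proof -
  have "norm (mmult S A B y x) \<le> (\<Sum>z\<in>S. norm (A y z) * norm (B z x))"
    unfolding mmult_def by (rule order_trans[OF norm_sum]) (simp add: norm_mult)
  also have "\<dots> \<le> (\<Sum>z\<in>S. nrm S A * norm (B z x))"
    using assms by (intro sum_mono mult_right_mono[OF entry_le_nrm]) auto
  also have "\<dots> = nrm S A * (\<Sum>z\<in>S. norm (B z x))" by (simp add: sum_distrib_left)
  also have "\<dots> \<le> nrm S A * nrm S B"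
    using assms by (intro mult_left_mono[OF col_le_nrm nrm_nonneg]) auto
  finally show ?thesis .
qed

lemma comm_bound:
  assumes "finite S" "y \<in> S" "x \<in> S"
  shows "norm (comm S A B y x) \<le> 2 * nrm S A * nrm S B"
proof -
  have "norm (comm S A B y x) \<le> norm (mmult S A B y x) + norm (mmult S B A y x)"
    unfolding comm_def by (simp add: norm_triangle_ineq4)
  also have "\<dots> \<le> nrm S A * nrm S B + nrm S B * nrm S A"
    using assms by (intro add_mono mmult_bound) auto
  finally show ?thesis by simp
qed

lemma nrm_B:
  assumes "finite S"
  shows "nrm S (deform_B \<beta> M) \<le> (2 + \<bar>\<beta>\<bar>) * nrm S M"
proof -
  have e: "norm (deform_B \<beta> M y x) \<le> norm (M y x) + norm (M x y) + \<bar>\<beta>\<bar> * norm (M y x)" for y x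
  proof -
    have "norm (deform_B \<beta> M y x) \<le> norm (dpart M y x) + norm (madj (dpart M) y x) + norm (\<i> * complex_of_real \<beta> * bpart M y x)"
      unfolding deform_B_def by (metis norm_triangle_ineq4 norm_triangle_ineq order_trans add_right_mono diff_conv_add_uminus)
    also have "\<dots> \<le> norm (M y x) + norm (M x y) + \<bar>\<beta>\<bar> * norm (M y x)"
      unfolding dpart_def madj_def bpart_def
      by (intro add_mono) (auto simp: norm_mult)
    finally show ?thesis .
  qed
  have "nrm S (deform_B \<beta> M) \<le> (\<Sum>y\<in>S. \<Sum>x\<in>S. norm (M y x) + norm (M x y) + \<bar>\<beta>\<bar> * norm (M y x))"
    unfolding nrm_def by (intro sum_mono e)
  also have "\<dots> = nrm S M + (\<Sum>y\<in>S. \<Sum>x\<in>S. norm (M x y)) + \<bar>\<beta>\<bar> * nrm S M"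
    unfolding nrm_def by (simp add: sum.distrib sum_distrib_left)
  also have "(\<Sum>y\<in>S. \<Sum>x\<in>S. norm (M x y)) = nrm S M"
    unfolding nrm_def by (rule sum.swap)
  finally have "nrm S (deform_B \<beta> M) \<le> nrm S M + nrm S M + \<bar>\<beta>\<bar> * nrm S M" .
  moreover have "(2 + \<bar>\<beta>\<bar>) * nrm S M = nrm S M + nrm S M + \<bar>\<beta>\<bar> * nrm S M"
    by (simp add: distrib_right)
  ultimately show ?thesis by linarith
qed



lemma ext_deriv_nz:
  assumes "ext_deriv y x \<noteq> 0" shows "x \<subseteq> y" "card y = card x + 1"
  using assms unfolding ext_deriv_def by (auto split: if_splits)

lemma simplices_fin: "simple_graph V E \<Longrightarrow> x \<in> simplices V E \<Longrightarrow> finite x"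
  unfolding simple_graph_def simplices_def by (auto intro: finite_subset)

lemma simplices_sub: "x \<in> simplices V E \<Longrightarrow> z \<subseteq> y \<Longrightarrow> y \<in> simplices V E \<Longrightarrow> x \<subseteq> z \<Longrightarrow> z \<in> simplices V E"
  unfolding simplices_def mem_Collect_eq
  apply (intro conjI)
  apply (meson subset_trans)
  apply blast
  apply blast
  done

lemma simplices_finite: "simple_graph V E \<Longrightarrow> finite (simplices V E)"
proof -
  assume "simple_graph V E"
  then have "finite (Pow V)" unfolding simple_graph_def by simp
  moreover have "simplices V E \<subseteq> Pow V" unfolding simplices_def by auto
  ultimately show ?thesis by (rule finite_subset[rotated])
qed

lemma ext_deriv_val:
  assumes "finite x" "c \<notin> x"
  shows "ext_deriv (insert c x) x = (-1) ^ card {w\<in>insert c x. w < c}"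
proof -
  have "insert c x - x = {c}" using assms by auto
  then show ?thesis unfolding ext_deriv_def using assms by auto
qed

lemma dd0:
  assumes G: "simple_graph V E" and y: "y \<in> simplices V E" and x: "x \<in> simplices V E"
  shows "(\<Sum>z\<in>simplices V E. ext_deriv y z * ext_deriv z x) = 0"
proof (cases "x \<subseteq> y \<and> card y = card x + 2")
  case False
  have "ext_deriv y z * ext_deriv z x = 0" for z
  proof (rule ccontr)
    assume "ext_deriv y z * ext_deriv z x \<noteq> 0"
    then have "ext_deriv y z \<noteq> 0" "ext_deriv z x \<noteq> 0" by auto
    from ext_deriv_nz[OF this(1)] ext_deriv_nz[OF this(2)] False show False by auto
  qed
  then show ?thesis by (intro sum.neutral) blast
next
  case True
  have fy: "finite y" using simplices_fin[OF G y] .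
  have fx: "finite x" using simplices_fin[OF G x] .
  have "card (y - x) = 2" using True fy fx by (simp add: card_Diff_subset)
  then obtain a b where ab: "y - x = {a, b}" "a < b"
    by (metis card_2_iff insert_commute linorder_neqE)
  have anx: "a \<notin> x" and bnx: "b \<notin> x" and ay: "a \<in> y" and by': "b \<in> y" using ab by auto
  have yeq: "y = insert a (insert b x)" using ab True by auto
  define za where "za = insert a x"
  define zb where "zb = insert b x"
  have zS: "za \<in> simplices V E" "zb \<in> simplices V E"
    unfolding za_def zb_def using x y True ay by' by (auto intro: simplices_sub)
  have neq: "za \<noteq> zb" unfolding za_def zb_def using anx bnx ab by auto
  have sub: "{za, zb} \<subseteq> simplices V E" using zS by auto
  have zero: "ext_deriv y z * ext_deriv z x = 0" if "z \<in> simplices V E - {za, zb}" for z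
  proof (rule ccontr)
    assume "ext_deriv y z * ext_deriv z x \<noteq> 0"
    then have "ext_deriv y z \<noteq> 0" "ext_deriv z x \<noteq> 0" by auto
    from ext_deriv_nz[OF this(1)] ext_deriv_nz[OF this(2)]
    have h: "z \<subseteq> y" "x \<subseteq> z" "card z = card x + 1" by auto
    have fz: "finite z" using h fy finite_subset by blast
    have "card (z - x) = 1" using h fz by (simp add: card_Diff_subset finite_subset)
    then obtain c where c: "z - x = {c}" by (auto simp: card_Suc_eq)
    then have "c \<in> y - x" using h by auto
    then have "c = a \<or> c = b" using ab by auto
    moreover have "z = insert c x" using c h by auto
    ultimately show False using that za_def zb_def by auto
  qed
  have "(\<Sum>z\<in>simplices V E. ext_deriv y z * ext_deriv z x) = (\<Sum>z\<in>{za, zb}. ext_deriv y z * ext_deriv z x)"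
    using sub zero simplices_finite[OF G] by (intro sum.mono_neutral_right) auto
  also have "\<dots> = ext_deriv y za * ext_deriv za x + ext_deriv y zb * ext_deriv zb x"
    using neq by simp
  also have "\<dots> = 0"
  proof -
    define p where "p = card {w\<in>x. w < a}"
    define q where "q = card {w\<in>x. w < b}"
    have y_za: "y = insert b za" unfolding za_def yeq by auto
    have y_zb: "y = insert a zb" unfolding zb_def yeq by auto
    have bza: "b \<notin> za" "finite za" unfolding za_def using bnx ab fx by auto
    have azb: "a \<notin> zb" "finite zb" unfolding zb_def using anx ab fx by auto
    have s1: "{w\<in>insert b za. w < b} = insert a {w\<in>x. w < b}" unfolding za_def using ab by auto
    have s2: "{w\<in>insert a x. w < a} = {w\<in>x. w < a}" by auto
    have s3: "{w\<in>insert a zb. w < a} = {w\<in>x. w < a}" unfolding zb_def using ab by auto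
    have s4: "{w\<in>insert b x. w < b} = {w\<in>x. w < b}" by auto
    have c1: "card (insert a {w\<in>x. w < b}) = q + 1" unfolding q_def using anx fx by auto
    have "ext_deriv y za = (-1) ^ (q + 1)"
      unfolding y_za ext_deriv_val[OF bza(2) bza(1)] s1 c1 ..
    moreover have "ext_deriv za x = (-1) ^ p"
      unfolding za_def ext_deriv_val[OF fx anx] s2 p_def ..
    moreover have "ext_deriv y zb = (-1) ^ p"
      unfolding y_zb ext_deriv_val[OF azb(2) azb(1)] s3 p_def ..
    moreover have "ext_deriv zb x = (-1) ^ q"
      unfolding zb_def ext_deriv_val[OF fx bnx] s4 q_def ..
    ultimately show ?thesis by (simp add: power_add)
  qed
  finally show ?thesis .
qed

lemma Dirac0_herm: "Dirac0 x y = cnj (Dirac0 y x)"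
  unfolding Dirac0_def madj_def by simp

lemma Lap_herm: "Laplacian S y x = cnj (Laplacian S x y)"
  unfolding Laplacian_def mmult_def
  by (simp add: Dirac0_herm[of y] Dirac0_herm[of _ x] mult.commute)

lemma Lap_block:
  assumes G: "simple_graph V E" and y: "y \<in> simplices V E" and x: "x \<in> simplices V E"
    and c: "card y \<noteq> card x"
  shows "Laplacian (simplices V E) y x = 0"
proof -
  let ?S = "simplices V E"
  have t: "Dirac0 y z * Dirac0 z x = ext_deriv y z * ext_deriv z x + cnj (ext_deriv x z * ext_deriv z y)" for z
  proof -
    have a: "ext_deriv y z * cnj (ext_deriv x z) = 0"
      using ext_deriv_nz[of y z] ext_deriv_nz[of x z] c by fastforce
    have b: "cnj (ext_deriv z y) * ext_deriv z x = 0"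
      using ext_deriv_nz[of z y] ext_deriv_nz[of z x] c by fastforce
    have "Dirac0 y z * Dirac0 z x = ext_deriv y z * ext_deriv z x + ext_deriv y z * cnj (ext_deriv x z)
       + cnj (ext_deriv z y) * ext_deriv z x + cnj (ext_deriv z y) * cnj (ext_deriv x z)"
      unfolding Dirac0_def madj_def by (simp add: algebra_simps)
    also have "\<dots> = ext_deriv y z * ext_deriv z x + cnj (ext_deriv x z * ext_deriv z y)"
      by (simp only: a b) (simp add: mult.commute)
    finally show ?thesis .
  qed
  have "Laplacian ?S y x = (\<Sum>z\<in>?S. ext_deriv y z * ext_deriv z x) + cnj (\<Sum>z\<in>?S. ext_deriv x z * ext_deriv z y)"
    unfolding Laplacian_def mmult_def t by (simp add: sum.distrib)
  also have "\<dots> = 0" using dd0[OF G y x] dd0[OF G x y] by simp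
  finally show ?thesis .
qed



lemma part_left:
  assumes G: "simple_graph V E" and y: "y \<in> simplices V E" and x: "x \<in> simplices V E"
  shows "mmult (simplices V E) (\<lambda>a b. if card a = h (card b) then M a b else 0) (Laplacian (simplices V E)) y x
       = (if card y = h (card x) then mmult (simplices V E) M (Laplacian (simplices V E)) y x else 0)"
proof -
  let ?S = "simplices V E" let ?L = "Laplacian ?S"
  have "(if card y = h (card z) then M y z else 0) * ?L z x = (if card y = h (card x) then M y z * ?L z x else 0)"
    if "z \<in> ?S" for z
    using Lap_block[OF G that x] by (cases "card z = card x") auto
  then show ?thesis unfolding mmult_def by (auto intro: sum.neutral cong: sum.cong)
qed

lemma part_right:
  assumes G: "simple_graph V E" and y: "y \<in> simplices V E" and x: "x \<in> simplices V E"
  shows "mmult (simplices V E) (Laplacian (simplices V E)) (\<lambda>a b. if card a = h (card b) then M a b else 0) y x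
       = (if card y = h (card x) then mmult (simplices V E) (Laplacian (simplices V E)) M y x else 0)"
proof -
  let ?S = "simplices V E" let ?L = "Laplacian ?S"
  have "?L y z * (if card z = h (card x) then M z x else 0) = (if card y = h (card x) then ?L y z * M z x else 0)"
    if "z \<in> ?S" for z
    using Lap_block[OF G y that] by (cases "card y = card z") auto
  then show ?thesis unfolding mmult_def by (auto intro: sum.neutral cong: sum.cong)
qed

lemma part_comm:
  assumes G: "simple_graph V E" and y: "y \<in> simplices V E" and x: "x \<in> simplices V E"
  shows "comm (simplices V E) (\<lambda>a b. if card a = h (card b) then M a b else 0) (Laplacian (simplices V E)) y x
       = (if card y = h (card x) then comm (simplices V E) M (Laplacian (simplices V E)) y x else 0)"
  unfolding comm_def using part_left[OF assms] part_right[OF assms] by simp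

lemma dpart_eq: "dpart M = (\<lambda>a b. if card a = Suc (card b) then M a b else 0)"
  unfolding dpart_def by simp
lemma bpart_eq: "bpart M = (\<lambda>a b. if card a = id (card b) then M a b else 0)"
  unfolding bpart_def by simp

lemma madj_comm: "comm S (madj A) (Laplacian S) y x = - cnj (comm S A (Laplacian S) x y)"
proof -
  have l: "mmult S (madj A) (Laplacian S) y x = cnj (mmult S (Laplacian S) A x y)"
    unfolding mmult_def madj_def by (simp add: Lap_herm[of S _ x] mult.commute)
  have r: "mmult S (Laplacian S) (madj A) y x = cnj (mmult S A (Laplacian S) x y)"
    unfolding mmult_def madj_def by (simp add: Lap_herm[of S y] mult.commute)
  show ?thesis unfolding comm_def using l r by simp
qed

lemma B_comm_split:
  "comm S (deform_B \<beta> M) C y x = comm S (dpart M) C y x - comm S (madj (dpart M)) C y x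
     + \<i> * complex_of_real \<beta> * comm S (bpart M) C y x"
  unfolding comm_def mmult_def deform_B_def
  by (simp add: algebra_simps sum.distrib sum_subtractf sum_distrib_left)

lemma BL_bound:
  assumes G: "simple_graph V E" and y: "y \<in> simplices V E" and x: "x \<in> simplices V E"
  shows "norm (comm (simplices V E) (deform_B \<beta> M) (Laplacian (simplices V E)) y x)
    \<le> (2 + \<bar>\<beta>\<bar>) * (2 * nrm (simplices V E) M * nrm (simplices V E) (mmult (simplices V E) M M - Laplacian (simplices V E)))"
proof -
  let ?S = "simplices V E" let ?L = "Laplacian ?S"
  let ?Q = "mmult ?S M M - ?L"
  let ?K = "2 * nrm ?S M * nrm ?S ?Q"
  have fin: "finite ?S" using simplices_finite[OF G] .
  have cl: "comm ?S M ?L = - comm ?S M ?Q"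
    using comm_diff_right[of ?S M "mmult ?S M M" ?L] comm_self_sq[of ?S M] by simp
  have nb: "norm (comm ?S M ?L a b) \<le> ?K" if "a \<in> ?S" "b \<in> ?S" for a b
    using comm_bound[OF fin that, of M ?Q] cl by simp
  have d1: "norm (comm ?S (dpart M) ?L y x) \<le> ?K"
    using part_comm[OF G y x, of Suc M] nb[OF y x] unfolding dpart_eq
    by (auto simp: nrm_nonneg)
  have d2: "norm (comm ?S (madj (dpart M)) ?L y x) \<le> ?K"
    using part_comm[OF G x y, of Suc M] nb[OF x y] unfolding dpart_eq madj_comm
    by (auto simp: nrm_nonneg)
  have d3: "norm (comm ?S (bpart M) ?L y x) \<le> ?K"
    using part_comm[OF G y x, of id M] nb[OF y x] unfolding bpart_eq
    by (auto simp: nrm_nonneg)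
  have "norm (comm ?S (deform_B \<beta> M) ?L y x) \<le> norm (comm ?S (dpart M) ?L y x)
     + norm (comm ?S (madj (dpart M)) ?L y x) + \<bar>\<beta>\<bar> * norm (comm ?S (bpart M) ?L y x)"
    unfolding B_comm_split
    by (rule order_trans[OF norm_triangle_ineq]) (auto simp: norm_mult intro!: add_mono norm_triangle_ineq4)
  also have "\<dots> \<le> ?K + ?K + \<bar>\<beta>\<bar> * ?K"
    using d1 d2 d3 by (intro add_mono mult_left_mono) auto
  also have "\<dots> = (2 + \<bar>\<beta>\<bar>) * ?K" by (simp add: distrib_right)
  finally show ?thesis .
qed


lemma gronwall_zero:
  fixes f f' k :: "real \<Rightarrow> real"
  assumes der: "\<And>t. (f has_real_derivative f' t) (at t)" and nn: "\<And>t. f t \<ge> 0"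
    and f0: "f 0 = 0" and kc: "continuous_on UNIV k" and bd: "\<And>t. \<bar>f' t\<bar> \<le> k t * f t"
  shows "f t = 0"
proof -
  define T where "T = \<bar>t\<bar>"
  have "compact (k ` {-T..T})"
    by (rule compact_continuous_image) (auto intro: continuous_on_subset[OF kc])
  then obtain M where M: "\<And>s. s \<in> {-T..T} \<Longrightarrow> \<bar>k s\<bar> \<le> M"
    using compact_imp_bounded bounded_real by (metis image_eqI)
  define M' where "M' = max M 0"
  have B: "\<bar>f' s\<bar> \<le> M' * f s" if "s \<in> {-T..T}" for s
  proof -
    have "k s \<le> M'" using M[OF that] unfolding M'_def by linarith
    then have "k s * f s \<le> M' * f s" using nn[of s] by (simp add: mult_right_mono)
    then show ?thesis using bd[of s] by linarith
  qed
  show ?thesis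
  proof (cases "t \<ge> 0")
    case True
    define g where "g s = f s * exp (- M' * s)" for s
    have "g t \<le> g 0"
    proof (rule DERIV_nonpos_imp_nonincreasing[OF True])
      fix s assume s: "0 \<le> s" "s \<le> t"
      have d: "DERIV g s :> f' s * exp (- M' * s) + f s * (exp (- M' * s) * (- M'))"
        unfolding g_def by (auto intro!: derivative_eq_intros der)
      have "s \<in> {-T..T}" using s T_def by auto
      then have "f' s \<le> M' * f s" using B by fastforce
      then have "f' s * exp (- M' * s) \<le> M' * f s * exp (- M' * s)"
        by (simp add: mult_right_mono)
      then have "f' s * exp (- M' * s) + f s * (exp (- M' * s) * (- M')) \<le> 0"
        by (simp add: algebra_simps)
      with d show "\<exists>y. DERIV g s :> y \<and> y \<le> 0" by blast
    qed
    then have "f t * exp (- M' * t) \<le> 0" using f0 unfolding g_def by simp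
    then have "f t \<le> 0" by (simp add: mult_le_0_iff)
    then show ?thesis using nn[of t] by linarith
  next
    case False
    then have tl: "t \<le> 0" by simp
    define g where "g s = f s * exp (M' * s)" for s
    have "g t \<le> g 0"
    proof (rule DERIV_nonneg_imp_nondecreasing[OF tl])
      fix s assume s: "t \<le> s" "s \<le> 0"
      have d: "DERIV g s :> f' s * exp (M' * s) + f s * (exp (M' * s) * M')"
        unfolding g_def by (auto intro!: derivative_eq_intros der)
      have "s \<in> {-T..T}" using s T_def by auto
      then have "- f' s \<le> M' * f s" using B by fastforce
      then have "(- f' s) * exp (M' * s) \<le> M' * f s * exp (M' * s)"
        by (rule mult_right_mono) simp
      then have "f' s * exp (M' * s) + f s * (exp (M' * s) * M') \<ge> 0"
        by (simp add: algebra_simps)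
      with d show "\<exists>y. DERIV g s :> y \<and> y \<ge> 0" by blast
    qed
    then have "f t * exp (M' * t) \<le> 0" using f0 unfolding g_def by simp
    then have "f t \<le> 0" by (simp add: mult_le_0_iff)
    then show ?thesis using nn[of t] by linarith
  qed
qed


lemma sq_deriv:
  fixes q :: "real \<Rightarrow> complex"
  assumes "(q has_vector_derivative q') (at t)"
  shows "((\<lambda>s. (cmod (q s))\<^sup>2) has_real_derivative 2 * (Re (q t) * Re q' + Im (q t) * Im q')) (at t)"
proof -
  note h = has_vector_derivative_complex_iff[THEN iffD1, OF assms]
  have r: "((\<lambda>s. Re (q s)) has_real_derivative Re q') (at t)" using h by blast
  have i: "((\<lambda>s. Im (q s)) has_real_derivative Im q') (at t)" using h by blast
  have "((\<lambda>s. (Re (q s))\<^sup>2 + (Im (q s))\<^sup>2) has_real_derivative 2 * (Re (q t) * Re q' + Im (q t) * Im q')) (at t)"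
    using assms by (auto intro!: derivative_eq_intros r i simp: algebra_simps)
  then show ?thesis by (simp add: cmod_power2)
qed

lemma re_im_bound: "\<bar>Re a * Re b + Im a * Im b\<bar> \<le> cmod a * cmod b"
proof -
  have "Re a * Re b + Im a * Im b = Re (cnj a * b)" by simp
  also have "\<bar>\<dots>\<bar> \<le> cmod (cnj a * b)" by (rule abs_Re_le_cmod)
  finally show ?thesis by (simp add: norm_mult)
qed

lemma nrm_sq_bound:
  assumes "finite S"
  shows "(nrm S A)\<^sup>2 \<le> real (card (S \<times> S)) * (\<Sum>y\<in>S. \<Sum>x\<in>S. (cmod (A y x))\<^sup>2)"
proof -
  have e1: "nrm S A = (\<Sum>p\<in>S \<times> S. cmod (A (fst p) (snd p)) * 1)"
    unfolding nrm_def by (simp add: sum.cartesian_product case_prod_beta)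
  have e2: "(\<Sum>y\<in>S. \<Sum>x\<in>S. (cmod (A y x))\<^sup>2) = (\<Sum>p\<in>S \<times> S. (cmod (A (fst p) (snd p)))\<^sup>2)"
    by (simp add: sum.cartesian_product case_prod_beta)
  show ?thesis unfolding e1 e2
    using Cauchy_Schwarz_ineq_sum[of "\<lambda>p. cmod (A (fst p) (snd p))" "\<lambda>_. 1" "S \<times> S"]
    by (simp add: mult.commute)
qed

theorem mainTheorem6:
  fixes V :: "'a::linorder set" and E :: "'a \<Rightarrow> 'a \<Rightarrow> bool"
    and \<beta> :: real and D :: "real \<Rightarrow> 'a op"
  assumes G: "simple_graph V E"
    and init: "\<forall>y\<in>simplices V E. \<forall>x\<in>simplices V E. D 0 y x = Dirac0 y x"
    and ode: "\<forall>t. \<forall>y\<in>simplices V E. \<forall>x\<in>simplices V E.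
       ((\<lambda>s. D s y x) has_vector_derivative
          (mmult (simplices V E) (deform_B \<beta> (D t)) (D t) y x
           - mmult (simplices V E) (D t) (deform_B \<beta> (D t)) y x)) (at t)"
  shows "\<forall>t. \<forall>y\<in>simplices V E. \<forall>x\<in>simplices V E.
           mmult (simplices V E) (D t) (D t) y x = Laplacian (simplices V E) y x"
proof -
  define S where "S = simplices V E"
  define L where "L = Laplacian S"
  have fin: "finite S" unfolding S_def using simplices_finite[OF G] .
  define B where "B t = deform_B \<beta> (D t)" for t
  define Q where "Q t = mmult S (D t) (D t) - L" for t
  have odeS: "((\<lambda>s. D s y x) has_vector_derivative comm S (B t) (D t) y x) (at t)"
    if "y \<in> S" "x \<in> S" for t y x
    using ode that unfolding S_def B_def comm_def by auto
  have Qder: "((\<lambda>s. Q s y x) has_vector_derivative comm S (B t) (mmult S (D t) (D t)) y x) (at t)"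
    if "y \<in> S" "x \<in> S" for t y x
  proof -
    have "((\<lambda>s. \<Sum>z\<in>S. D s y z * D s z x) has_vector_derivative
        (\<Sum>z\<in>S. D t y z * comm S (B t) (D t) z x + comm S (B t) (D t) y z * D t z x)) (at t)"
      using that by (intro has_vector_derivative_sum has_vector_derivative_mult odeS) auto
    moreover have "(\<Sum>z\<in>S. D t y z * comm S (B t) (D t) z x + comm S (B t) (D t) y z * D t z x)
        = comm S (B t) (mmult S (D t) (D t)) y x"
    proof -
      have "(\<Sum>z\<in>S. D t y z * comm S (B t) (D t) z x + comm S (B t) (D t) y z * D t z x)
          = (mmult S (comm S (B t) (D t)) (D t) + mmult S (D t) (comm S (B t) (D t))) y x"
        unfolding mmult_def by (simp add: sum.distrib add.commute)
      then show ?thesis using deriv_sq_alg[of S "B t" "D t"] by simp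
    qed
    ultimately have "((\<lambda>s. mmult S (D s) (D s) y x) has_vector_derivative comm S (B t) (mmult S (D t) (D t)) y x) (at t)"
      unfolding mmult_def by simp
    then show ?thesis unfolding Q_def by (simp add: has_vector_derivative_diff_const)
  qed
  define K where "K t = 4 * (2 + \<bar>\<beta>\<bar>) * nrm S (D t)" for t
  have Qbound: "norm (comm S (B t) (mmult S (D t) (D t)) y x) \<le> K t * nrm S (Q t)"
    if y: "y \<in> S" and x: "x \<in> S" for t y x
  proof -
    have split: "comm S (B t) (mmult S (D t) (D t)) = comm S (B t) (Q t) + comm S (B t) L"
      unfolding Q_def comm_diff_right by simp
    have "norm (comm S (B t) (Q t) y x) \<le> 2 * nrm S (B t) * nrm S (Q t)"
      using comm_bound[OF fin y x] .
    also have "\<dots> \<le> 2 * ((2 + \<bar>\<beta>\<bar>) * nrm S (D t)) * nrm S (Q t)"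
      unfolding B_def using nrm_B[OF fin, of \<beta> "D t"] nrm_nonneg[of S "Q t"]
      by (intro mult_right_mono) auto
    finally have a: "norm (comm S (B t) (Q t) y x) \<le> 2 * ((2 + \<bar>\<beta>\<bar>) * nrm S (D t)) * nrm S (Q t)" .
    have b: "norm (comm S (B t) L y x) \<le> (2 + \<bar>\<beta>\<bar>) * (2 * nrm S (D t) * nrm S (Q t))"
      using BL_bound[OF G, of y x \<beta> "D t"] y x unfolding S_def L_def B_def Q_def by simp
    have "norm (comm S (B t) (mmult S (D t) (D t)) y x) \<le> norm (comm S (B t) (Q t) y x) + norm (comm S (B t) L y x)"
      unfolding split by (simp add: norm_triangle_ineq)
    also have "\<dots> \<le> K t * nrm S (Q t)" using a b unfolding K_def by (simp add: algebra_simps)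
    finally show ?thesis .
  qed
  define n where "n = real (card (S \<times> S))"
  define f where "f t = (\<Sum>y\<in>S. \<Sum>x\<in>S. (cmod (Q t y x))\<^sup>2)" for t
  define f' where "f' t = (\<Sum>y\<in>S. \<Sum>x\<in>S. 2 * (Re (Q t y x) * Re (comm S (B t) (mmult S (D t) (D t)) y x)
        + Im (Q t y x) * Im (comm S (B t) (mmult S (D t) (D t)) y x)))" for t
  have fder: "(f has_real_derivative f' t) (at t)" for t
    unfolding f_def f'_def
    by (intro DERIV_sum sq_deriv Qder) auto
  have fnn: "f t \<ge> 0" for t unfolding f_def by (intro sum_nonneg) auto
  have f0: "f 0 = 0"
  proof -
    have "Q 0 y x = 0" if "y \<in> S" "x \<in> S" for y x
      using init that unfolding Q_def L_def Laplacian_def mmult_def S_def by simp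
    then show ?thesis unfolding f_def by simp
  qed
  have kc: "continuous_on UNIV (\<lambda>t. 2 * K t * n)"
  proof (rule continuous_at_imp_continuous_on, intro ballI)
    fix t :: real
    have "isCont (\<lambda>s. D s y x) t" if "y \<in> S" "x \<in> S" for y x
      using has_vector_derivative_continuous[OF odeS[OF that]] .
    then have "isCont (\<lambda>s. nrm S (D s)) t"
      unfolding nrm_def by (intro continuous_intros) auto
    then show "isCont (\<lambda>t. 2 * K t * n) t" unfolding K_def by (intro continuous_intros)
  qed
  have fbound: "\<bar>f' t\<bar> \<le> 2 * K t * n * f t" for t
  proof -
    have Kn: "K t \<ge> 0" unfolding K_def using nrm_nonneg[of S "D t"] by simp
    have "\<bar>f' t\<bar> \<le> (\<Sum>y\<in>S. \<Sum>x\<in>S. \<bar>2 * (Re (Q t y x) * Re (comm S (B t) (mmult S (D t) (D t)) y x)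
        + Im (Q t y x) * Im (comm S (B t) (mmult S (D t) (D t)) y x))\<bar>)"
      unfolding f'_def by (rule order_trans[OF sum_abs]) (intro sum_mono sum_abs)
    also have "\<dots> \<le> (\<Sum>y\<in>S. \<Sum>x\<in>S. 2 * (cmod (Q t y x) * (K t * nrm S (Q t))))"
    proof (intro sum_mono)
      fix y x assume y: "y \<in> S" and x: "x \<in> S"
      have "\<bar>2 * (Re (Q t y x) * Re (comm S (B t) (mmult S (D t) (D t)) y x)
        + Im (Q t y x) * Im (comm S (B t) (mmult S (D t) (D t)) y x))\<bar>
        \<le> 2 * (cmod (Q t y x) * cmod (comm S (B t) (mmult S (D t) (D t)) y x))"
        using re_im_bound[of "Q t y x" "comm S (B t) (mmult S (D t) (D t)) y x"] by (simp add: abs_mult)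
      also have "\<dots> \<le> 2 * (cmod (Q t y x) * (K t * nrm S (Q t)))"
        using Qbound[OF y x, of t] by (intro mult_left_mono) auto
      finally show "\<bar>2 * (Re (Q t y x) * Re (comm S (B t) (mmult S (D t) (D t)) y x)
        + Im (Q t y x) * Im (comm S (B t) (mmult S (D t) (D t)) y x))\<bar>
        \<le> 2 * (cmod (Q t y x) * (K t * nrm S (Q t)))" .
    qed
    also have "\<dots> = 2 * K t * nrm S (Q t) * (\<Sum>y\<in>S. \<Sum>x\<in>S. cmod (Q t y x))"
      by (simp add: sum_distrib_left mult_ac)
    also have "\<dots> = 2 * K t * (nrm S (Q t))\<^sup>2"
      unfolding nrm_def by (simp add: power2_eq_square)
    also have "\<dots> \<le> 2 * K t * (n * f t)"
      using nrm_sq_bound[OF fin, of "Q t"] Kn unfolding n_def f_def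
      by (intro mult_left_mono) auto
    finally show ?thesis by (simp add: algebra_simps)
  qed
  have fz: "f t = 0" for t
    using gronwall_zero[OF fder fnn f0 kc] fbound by blast
  show ?thesis
  proof (intro allI ballI)
    fix t y x assume y: "y \<in> simplices V E" and x: "x \<in> simplices V E"
    have "(\<Sum>x\<in>S. (cmod (Q t y x))\<^sup>2) = 0"
      using fz[of t] fin y unfolding f_def S_def
      by (subst (asm) sum_nonneg_eq_0_iff) (auto intro: sum_nonneg)
    then have "(cmod (Q t y x))\<^sup>2 = 0"
      using fin x unfolding S_def by (subst (asm) sum_nonneg_eq_0_iff) auto
    then show "mmult (simplices V E) (D t) (D t) y x = Laplacian (simplices V E) y x"
      unfolding Q_def L_def S_def by simp
  qed
qed


end
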